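(* Let $f(x,y)=\tfrac12(x^2+y^2)$ and let $p_1,\dots,p_n\in Q$ be pairwise distinct with $M_{W_i}>0$. Then the performance function $$\mathcal H(p_1,\dots,p_n)=\int_Q\min_{(a,b)\in C}\tfrac12\big(\|q-p_a\|^2+\|q-p_b\|^2\big)\phi(q)\,dq$$ satisfies $$\frac{\partial\mathcal H}{\partial p_i}=-\sum_{\mathcal T_{ij}\in\mathcal P_i}M_{V_{\mathcal T_{ij}}}\big(C_{V_{\mathcal T_{ij}}}-p_i\big)=-M_{W_i}\,(C_{W_i}-p_i).$$
   Context: $Q\subset\mathbb{R}^2$ is a compact convex polygon, $\phi:Q\to[0,\infty)$ a $C^2$ density, $n\ge3$, $C=\{(a,b):1\le a<b\le n\}$. For $i\neq j$, $V_{\mathcal T_{ij}}=\{q\in Q:\|q-p_v\|\le\|q-p_w\|\ \forall v\in\{i,j\},\ w\notin\{i,j\}\}$ is the order-2 Voronoi cell generated by $\{p_i,p_j\}$; $\mathcal P_i$ is the collection of all such cells' generating pairs containing $i$. Mass and centroid: $M_{V}=\int_V\phi(q)dq$, $C_V=\frac{1}{M_V}\int_V q\phi(q)dq$. $W_i=\bigcup_{\mathcal T_{ij}\in\mathcal P_i}V_{\mathcal T_{ij}}$, $M_{W_i}=\sum_{\mathcal T_{ij}\in\mathcal P_i}M_{V_{\mathcal T_{ij}}}$, $C_{W_i}=\frac{1}{M_{W_i}}\sum_{\mathcal T_{ij}\in\mathcal P_i}M_{V_{\mathcal T_{ij}}}C_{V_{\mathcal T_{ij}}}$. *)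

theory Defs
  imports "HOL-Analysis.Analysis"
begin

type_synonym pt = "real^2"

definition C2_on :: "pt set \<Rightarrow> (pt \<Rightarrow> real) \<Rightarrow> bool" where
  "C2_on U f \<longleftrightarrow> (\<exists>(f' :: pt \<Rightarrow> pt \<Rightarrow>\<^sub>L real) (f'' :: pt \<Rightarrow> pt \<Rightarrow>\<^sub>L (pt \<Rightarrow>\<^sub>L real)).
      (\<forall>x\<in>U. (f has_derivative blinfun_apply (f' x)) (at x)) \<and>
      (\<forall>x\<in>U. (f' has_derivative blinfun_apply (f'' x)) (at x)) \<and>
      continuous_on U f'')"

definition vor2 :: "pt set \<Rightarrow> nat \<Rightarrow> (nat \<Rightarrow> pt) \<Rightarrow> nat \<Rightarrow> nat \<Rightarrow> pt set" where
  "vor2 Q n p i j = {q \<in> Q. \<forall>v\<in>{i, j}. \<forall>w\<in>{1..n} - {i, j}. dist q (p v) \<le> dist q (p w)}"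

text \<open>Indices j such that T_ij is (the generating pair of) an order-2 Voronoi cell, i.e. in P_i.\<close>
definition Pidx :: "pt set \<Rightarrow> nat \<Rightarrow> (nat \<Rightarrow> pt) \<Rightarrow> nat \<Rightarrow> nat set" where
  "Pidx Q n p i = {j \<in> {1..n}. j \<noteq> i \<and> vor2 Q n p i j \<noteq> {}}"

definition mass :: "(pt \<Rightarrow> real) \<Rightarrow> pt set \<Rightarrow> real" where
  "mass \<phi> V = integral V \<phi>"

definition centroid :: "(pt \<Rightarrow> real) \<Rightarrow> pt set \<Rightarrow> pt" where
  "centroid \<phi> V = (1 / mass \<phi> V) *\<^sub>R integral V (\<lambda>q. \<phi> q *\<^sub>R q)"

definition massW :: "pt set \<Rightarrow> (pt \<Rightarrow> real) \<Rightarrow> nat \<Rightarrow> (nat \<Rightarrow> pt) \<Rightarrow> nat \<Rightarrow> real" where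
  "massW Q \<phi> n p i = (\<Sum>j\<in>Pidx Q n p i. mass \<phi> (vor2 Q n p i j))"

definition centroidW :: "pt set \<Rightarrow> (pt \<Rightarrow> real) \<Rightarrow> nat \<Rightarrow> (nat \<Rightarrow> pt) \<Rightarrow> nat \<Rightarrow> pt" where
  "centroidW Q \<phi> n p i = (1 / massW Q \<phi> n p i) *\<^sub>R
     (\<Sum>j\<in>Pidx Q n p i. mass \<phi> (vor2 Q n p i j) *\<^sub>R centroid \<phi> (vor2 Q n p i j))"

definition perfH :: "pt set \<Rightarrow> (pt \<Rightarrow> real) \<Rightarrow> nat \<Rightarrow> (nat \<Rightarrow> pt) \<Rightarrow> real" where
  "perfH Q \<phi> n p = integral Q (\<lambda>q.
     (Min ((\<lambda>(a, b). (1/2) * ((norm (q - p a))\<^sup>2 + (norm (q - p b))\<^sup>2))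
            ` {(a, b). 1 \<le> a \<and> a < b \<and> b \<le> n})) * \<phi> q)"

end

theory Submission
  imports Defs "HOL-Analysis.Analysis"
begin


lemma K_two:
  assumes n: "3 \<le> (n::nat)" and i: "i \<in> {1..n}"
  obtains a b where "a \<in> {1..n}-{i}" "b \<in> {1..n}-{i}" "a < b"
proof -
  have "(if i = 1 then 2 else 1) \<in> {1..n}-{i}" "(if i = 3 then 2 else 3) \<in> {1..n}-{i}"
    "(if i = 1 then 2 else (1::nat)) < (if i = 3 then 2 else 3)"
    using n i by auto
  then show ?thesis using that by blast
qed

lemma finite_pairs: "finite {(a,b). a \<in> K \<and> b \<in> K \<and> (a::nat) < b}" if "finite K"
  by (rule finite_subset[of _ "K \<times> K"]) (use that in auto)

lemma finite_P: "finite {(a,b). 1 \<le> a \<and> a < b \<and> b \<le> (n::nat)}"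
  by (rule finite_subset[of _ "{1..n} \<times> {1..n}"]) auto

lemma pairs_split:
  fixes f :: "nat \<Rightarrow> real"
  assumes n: "3 \<le> n" and i: "i \<in> {1..n}"
  shows "Min ((\<lambda>(a,b). (1/2)*(f a + f b)) ` {(a,b). 1 \<le> a \<and> a < b \<and> b \<le> n})
    = min (Min ((\<lambda>(a,b). (1/2)*(f a + f b)) ` {(a,b). a \<in> {1..n}-{i} \<and> b \<in> {1..n}-{i} \<and> a < b}))
          ((1/2)* f i + Min ((\<lambda>k. (1/2)*f k) ` ({1..n}-{i})))"
proof -
  define K where "K = {1..n}-{i}"
  define PK where "PK = {(a,b). a \<in> K \<and> b \<in> K \<and> a < b}"
  define P where "P = {(a,b). 1 \<le> a \<and> a < b \<and> b \<le> n}"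
  define g where "g = (\<lambda>(a,b). (1/2)*(f a + f b))"
  define A where "A = Min (g ` PK)"
  define B where "B = Min ((\<lambda>k. (1/2)*f k) ` K)"
  obtain a0 b0 where ab: "a0 \<in> K" "b0 \<in> K" "a0 < b0" using K_two[OF n i] K_def by blast
  have fK: "finite K" unfolding K_def by auto
  have fPK: "finite PK" unfolding PK_def using finite_pairs[OF fK] .
  have neK: "K \<noteq> {}" using ab by auto
  have nePK: "PK \<noteq> {}" using ab unfolding PK_def by auto
  have fP: "finite P" unfolding P_def using finite_P .
  have PKP: "PK \<subseteq> P" unfolding PK_def P_def K_def by auto
  have Ale: "A \<le> g x" if "x \<in> PK" for x unfolding A_def by (rule Min_le) (use that fPK in auto)
  have Ble: "B \<le> (1/2)*f k" if "k \<in> K" for k unfolding B_def by (rule Min_le) (use that fK in auto)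
  have "A \<in> g ` PK" unfolding A_def using fPK nePK by simp
  have "B \<in> (\<lambda>k. (1/2)*f k) ` K" unfolding B_def by (rule Min_in) (use fK neK in auto)
  then obtain c where c: "c \<in> K" "B = (1/2) * f c" by auto
  have "Min (g ` P) = min A ((1/2)* f i + B)"
  proof (rule Min_eqI)
    show "finite (g ` P)" using fP by simp
    show "min A (1 / 2 * f i + B) \<le> y" if "y \<in> g ` P" for y
    proof -
      obtain a b where y: "y = g (a,b)" "(a,b) \<in> P" using \<open>y \<in> g ` P\<close> by auto
      show ?thesis
      proof (cases "a = i \<or> b = i")
        case True
        then show ?thesis
        proof
          assume "a = i"
          then have "b \<in> K" using y i unfolding P_def K_def by auto
          then show ?thesis using Ble[of b] y \<open>a = i\<close> unfolding g_def by auto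
        next
          assume "b = i"
          then have "a \<in> K" using y i unfolding P_def K_def by auto
          then show ?thesis using Ble[of a] y \<open>b = i\<close> unfolding g_def by auto
        qed
      next
        case False
        then have "(a,b) \<in> PK" using y unfolding P_def PK_def K_def by auto
        then show ?thesis using Ale y by fastforce
      qed
    qed
    show "min A (1 / 2 * f i + B) \<in> g ` P"
    proof (cases "A \<le> 1 / 2 * f i + B")
      case True
      then show ?thesis using \<open>A \<in> g ` PK\<close> PKP by auto
    next
      case False
      have "(min i c, max i c) \<in> P" using c i unfolding P_def K_def by auto
      moreover have "g (min i c, max i c) = 1 / 2 * f i + B"
        unfolding g_def c(2) by (cases "i \<le> c") (auto simp: min_def max_def algebra_simps)
      ultimately show ?thesis using False by (metis image_eqI min_def)
    qed
  qed
  then show ?thesis unfolding P_def g_def A_def PK_def B_def K_def by simp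
qed



definition KK :: "nat \<Rightarrow> nat \<Rightarrow> nat set" where "KK n i = {1..n} - {i}"
definition Apr :: "(nat \<Rightarrow> real) \<Rightarrow> nat \<Rightarrow> nat \<Rightarrow> real" where
  "Apr f n i = Min ((\<lambda>(a,b). (1/2)*(f a + f b)) ` {(a,b). a \<in> KK n i \<and> b \<in> KK n i \<and> a < b})"
definition Bmn :: "(nat \<Rightarrow> real) \<Rightarrow> nat \<Rightarrow> nat \<Rightarrow> real" where
  "Bmn f n i = Min ((\<lambda>k. (1/2)*f k) ` KK n i)"

lemma AB_facts:
  fixes f :: "nat \<Rightarrow> real"
  assumes n: "3 \<le> n" and i: "i \<in> {1..n}"
  shows Ble: "\<And>k. k \<in> KK n i \<Longrightarrow> Bmn f n i \<le> (1/2)*f k"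
    and Ale: "\<And>a b. a \<in> KK n i \<Longrightarrow> b \<in> KK n i \<Longrightarrow> a < b \<Longrightarrow> Apr f n i \<le> (1/2)*(f a + f b)"
    and Bin: "\<exists>c\<in>KK n i. Bmn f n i = (1/2)*f c"
    and Ain: "\<exists>a b. a \<in> KK n i \<and> b \<in> KK n i \<and> a < b \<and> Apr f n i = (1/2)*(f a + f b)"
proof -
  define K where "K = KK n i"
  define PK where "PK = {(a,b). a \<in> K \<and> b \<in> K \<and> a < b}"
  define g where "g = (\<lambda>(a,b). (1/2)*(f a + f b))"
  obtain a0 b0 where ab: "a0 \<in> K" "b0 \<in> K" "a0 < b0" using K_two[OF n i] unfolding K_def KK_def by blast
  have fK: "finite K" unfolding K_def KK_def by auto
  have fPK: "finite PK" unfolding PK_def using finite_pairs[OF fK] .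
  have neK: "K \<noteq> {}" using ab by auto
  have nePK: "PK \<noteq> {}" using ab unfolding PK_def by auto
  show "Bmn f n i \<le> (1/2)*f k" if "k \<in> KK n i" for k
    unfolding Bmn_def by (rule Min_le) (use that fK K_def in auto)
  show "Apr f n i \<le> (1/2)*(f a + f b)" if "a \<in> KK n i" "b \<in> KK n i" "a < b" for a b
  proof -
    have "(a,b) \<in> PK" using that unfolding PK_def K_def by auto
    then have "g (a,b) \<in> g ` PK" by blast
    then show ?thesis unfolding Apr_def
      using Min_le[OF finite_imageI[OF fPK], of "g (a,b)"] unfolding g_def PK_def K_def by auto
  qed
  have "Bmn f n i \<in> (\<lambda>k. (1/2)*f k) ` K" unfolding Bmn_def K_def by (rule Min_in) (use fK neK K_def in auto)
  then show "\<exists>c\<in>KK n i. Bmn f n i = (1/2)*f c" unfolding K_def by auto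
  have "Apr f n i \<in> g ` PK" unfolding Apr_def g_def PK_def K_def
    by (rule Min_in) (use fPK nePK PK_def K_def in auto)
  then obtain a b where ab': "(a,b) \<in> PK" "Apr f n i = g (a,b)" by auto
  then have "a \<in> KK n i" "b \<in> KK n i" "a < b" "Apr f n i = (1/2)*(f a + f b)"
    unfolding PK_def K_def g_def by auto
  then show "\<exists>a b. a \<in> KK n i \<and> b \<in> KK n i \<and> a < b \<and> Apr f n i = (1/2)*(f a + f b)"
    by blast
qed

lemma m_is_e:
  fixes f :: "nat \<Rightarrow> real"
  assumes n: "3 \<le> n" and i: "i \<in> {1..n}"
  shows "\<exists>k\<in>KK n i. Apr f n i = Bmn f n i + (1/2)*f k"
proof -
  obtain c where c: "c \<in> KK n i" "Bmn f n i = (1/2)*f c" using Bin[OF n i] by blast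
  obtain a b where ab: "a \<in> KK n i" "b \<in> KK n i" "a < b" "Apr f n i = (1/2)*(f a + f b)"
    using Ain[OF n i] by blast
  show ?thesis
  proof (cases "c = a \<or> c = b")
    case True
    then show ?thesis
    proof
      assume "c = a" then show ?thesis using ab c by (intro bexI[of _ b]) (auto simp: algebra_simps)
    next
      assume "c = b" then show ?thesis using ab c by (intro bexI[of _ a]) (auto simp: algebra_simps)
    qed
  next
    case False
    have "Apr f n i \<le> (1/2)*(f a + f c)"
    proof (cases "a < c")
      case True then show ?thesis using Ale[where f=f, OF n i ab(1) c(1)] by auto
    next
      case False then have "c < a" using \<open>\<not> (c = a \<or> c = b)\<close> by auto
      then show ?thesis using Ale[where f=f, OF n i c(1) ab(1)] by (auto simp: algebra_simps)
    qed
    moreover have "Bmn f n i \<le> (1/2) * f b" using Ble[where f=f, OF n i ab(2)] .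
    ultimately show ?thesis using ab c by (intro bexI[of _ a]) auto
  qed
qed

lemma cell_imp:
  fixes f :: "nat \<Rightarrow> real"
  assumes n: "3 \<le> n" and i: "i \<in> {1..n}" and j: "j \<in> KK n i"
    and C: "\<forall>v\<in>{i,j}. \<forall>w\<in>{1..n}-{i,j}. f v \<le> f w"
  shows "(1/2)*f i + Bmn f n i \<le> Apr f n i"
proof -
  have Ci: "f i \<le> f w" if "w \<in> KK n i" "w \<noteq> j" for w
    using C that unfolding KK_def by blast
  have Cj: "f j \<le> f w" if "w \<in> KK n i" for w
  proof (cases "w = j")
    case False then show ?thesis using C that unfolding KK_def by blast
  qed simp
  have B: "Bmn f n i = (1/2)*f j"
  proof -
    obtain c where c: "c \<in> KK n i" "Bmn f n i = (1/2)*f c" using Bin[OF n i] by blast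
    have "f j \<le> f c" using Cj c(1) .
    moreover have "Bmn f n i \<le> (1/2)*f j" using Ble[where f=f, OF n i j] .
    ultimately show ?thesis using c by linarith
  qed
  obtain a b where ab: "a \<in> KK n i" "b \<in> KK n i" "a < b" "Apr f n i = (1/2)*(f a + f b)"
    using Ain[OF n i] by blast
  have "f i + f j \<le> f a + f b"
  proof (cases "a = j")
    case True
    then have "b \<noteq> j" using ab by auto
    then have "f i \<le> f b" using Ci ab(2) by blast
    then show ?thesis using True Cj[OF ab(1)] by simp
  next
    case False
    then have "f i \<le> f a" using Ci ab(1) by blast
    moreover have "f j \<le> f b" using Cj ab(2) by blast
    ultimately show ?thesis by linarith
  qed
  then show ?thesis using B ab(4) by (simp add: field_simps)
qed

lemma imp_cell:
  fixes f :: "nat \<Rightarrow> real"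
  assumes n: "3 \<le> n" and i: "i \<in> {1..n}"
    and le: "(1/2)*f i + Bmn f n i \<le> Apr f n i"
  shows "\<exists>c\<in>KK n i. \<forall>v\<in>{i,c}. \<forall>w\<in>{1..n}-{i,c}. f v \<le> f w"
proof -
  obtain c where c: "c \<in> KK n i" "Bmn f n i = (1/2)*f c" using Bin[OF n i] by blast
  have "f v \<le> f w" if v: "v \<in> {i,c}" and w: "w \<in> {1..n}-{i,c}" for v w
  proof -
    have wK: "w \<in> KK n i" using w by (auto simp: KK_def)
    have 1: "f c \<le> f w" using Ble[where f=f, OF n i wK] c by linarith
    have "Apr f n i \<le> (1/2)*(f c + f w)"
    proof (cases "c < w")
      case True then show ?thesis using Ale[where f=f, OF n i c(1) wK] by auto
    next
      case False then have "w < c" using w by auto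
      then show ?thesis using Ale[where f=f, OF n i wK c(1)] by (auto simp: algebra_simps)
    qed
    then have "(1/2)*f i + (1/2)*f c \<le> (1/2)*(f c + f w)" using le c(2) by simp
    then have "f i \<le> f w" by (simp add: field_simps)
    then show ?thesis using 1 v by blast
  qed
  then show ?thesis using c by blast
qed



lemma norm_eq_iff_hyper:
  fixes q a b :: pt
  shows "norm (q - a) = norm (q - b) \<longleftrightarrow> (2 *\<^sub>R (b - a)) \<bullet> q = b \<bullet> b - a \<bullet> a"
proof -
  have "norm (q - a) = norm (q - b) \<longleftrightarrow> (norm (q - a))^2 = (norm (q - b))^2"
    by (metis norm_ge_zero power2_eq_iff_nonneg)
  also have "\<dots> \<longleftrightarrow> (2 *\<^sub>R (b - a)) \<bullet> q = b \<bullet> b - a \<bullet> a"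
    by (simp add: power2_norm_eq_inner inner_diff_left inner_diff_right inner_commute algebra_simps)
  finally show ?thesis .
qed

lemma negligible_equidist:
  fixes a b :: pt
  assumes "a \<noteq> b"
  shows "negligible {q. norm (q - a) = norm (q - b)}"
proof -
  have eq: "{q. norm (q - a) = norm (q - b)} = {q. (2 *\<^sub>R (b - a)) \<bullet> q = b \<bullet> b - a \<bullet> a}"
    using norm_eq_iff_hyper by blast
  have "2 *\<^sub>R (b - a) \<noteq> 0" using assms by auto
  then show ?thesis unfolding eq by (intro negligible_hyperplane) simp
qed

lemma int_compact:
  fixes f :: "pt \<Rightarrow> 'b::euclidean_space"
  assumes "compact S" "continuous_on S f"
  shows "f integrable_on S"
  using set_borel_integral_eq_integral(1)[unfolded set_integrable_def, OF borel_integrable_compact[OF assms]] .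

lemma continuous_on_Min_img:
  fixes g :: "'i \<Rightarrow> 'a::topological_space \<Rightarrow> real"
  assumes "finite I" "I \<noteq> {}" "\<And>k. k \<in> I \<Longrightarrow> continuous_on S (g k)"
  shows "continuous_on S (\<lambda>q. Min ((\<lambda>k. g k q) ` I))"
  using assms
proof (induction I rule: finite_ne_induct)
  case (singleton x)
  then show ?case by simp
next
  case (insert x F)
  have "(\<lambda>q. Min ((\<lambda>k. g k q) ` insert x F)) = (\<lambda>q. min (g x q) (Min ((\<lambda>k. g k q) ` F)))"
    using insert by (auto simp: Min_insert)
  then show ?case using insert by (auto intro!: continuous_on_min)
qed

lemma slab_lim:
  fixes Q :: "pt set" and a b :: pt
  assumes Q: "compact Q" and ab: "a \<noteq> b"
  shows "((\<lambda>d. measure lebesgue (Q \<inter> {q. \<bar>(1/2)*(norm (q - a))^2 - (1/2)*(norm (q - b))^2\<bar> \<le> d})) \<longlongrightarrow> 0) (at_right 0)"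
proof -
  define g where "g = (\<lambda>q::pt. (1/2)*(norm (q - a))^2 - (1/2)*(norm (q - b))^2)"
  define S where "S = (\<lambda>d. Q \<inter> {q. \<bar>g q\<bar> \<le> d})"
  have cg: "continuous_on UNIV g" unfolding g_def by (intro continuous_intros)
  have cS: "compact (S d)" for d
  proof -
    have "closed {q. \<bar>g q\<bar> \<le> d}"
      by (rule closed_Collect_le) (use cg in \<open>auto intro: continuous_intros\<close>)
    then show ?thesis unfolding S_def using Q by (simp add: compact_Int_closed)
  qed
  then have mS: "S d \<in> lmeasurable" for d by (simp add: lmeasurable_compact)
  define A where "A = (\<lambda>j::nat. S (inverse (real (Suc j))))"
  have dec: "decseq A"
    unfolding decseq_def A_def S_def
  proof (intro allI impI subsetI)
    fix m n :: nat and x assume mn: "m \<le> n" and x: "x \<in> Q \<inter> {q. \<bar>g q\<bar> \<le> inverse (real (Suc n))}"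
    have le: "inverse (real (Suc n)) \<le> inverse (real (Suc m))"
      using mn by (simp add: le_imp_inverse_le)
    have "\<bar>g x\<bar> \<le> inverse (real (Suc n))" using x by blast
    from order_trans[OF this le] x show "x \<in> Q \<inter> {q. \<bar>g q\<bar> \<le> inverse (real (Suc m))}" by blast
  qed
  have lim: "(\<lambda>j. measure lebesgue (A j)) \<longlonglongrightarrow> measure lebesgue (\<Inter>j. A j)"
  proof (rule Lim_measure_decseq)
    show "range A \<subseteq> sets lebesgue" using mS unfolding A_def by (auto intro: fmeasurableD)
    show "decseq A" by (rule dec)
    show "emeasure lebesgue (A j) \<noteq> \<infinity>" for j using fmeasurableD2[OF mS] unfolding A_def by simp
  qed
  have "(\<Inter>j. A j) \<subseteq> {q. norm (q - a) = norm (q - b)}"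
  proof
    fix q assume q: "q \<in> (\<Inter>j. A j)"
    have "g q = 0"
    proof (rule ccontr)
      assume "g q \<noteq> 0"
      then obtain j where j: "j > 0" "inverse (real j) < \<bar>g q\<bar>"
        using ex_inverse_of_nat_less[of "\<bar>g q\<bar>"] by auto
      then obtain j' where "j = Suc j'" using gr0_implies_Suc by blast
      with q j have "\<bar>g q\<bar> \<le> inverse (real (Suc j'))" unfolding A_def S_def by blast
      then show False using j \<open>j = Suc j'\<close> by simp
    qed
    then have "(norm (q - a))^2 = (norm (q - b))^2" unfolding g_def by auto
    then show "q \<in> {q. norm (q - a) = norm (q - b)}"
      by (simp add: power2_eq_iff_nonneg)
  qed
  then have "negligible (\<Inter>j. A j)" using negligible_equidist[OF ab] negligible_subset by blast
  then have lim0: "(\<lambda>j. measure lebesgue (A j)) \<longlonglongrightarrow> 0" using lim negligible_imp_measure0 by metis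
  have "((\<lambda>d. measure lebesgue (S d)) \<longlongrightarrow> 0) (at_right 0)"
  proof (rule order_tendstoI)
    fix e :: real assume "e < 0"
    then show "\<forall>\<^sub>F d in at_right 0. e < measure lebesgue (S d)"
      by (intro always_eventually allI) (rule less_le_trans[OF _ measure_nonneg])
  next
    fix e :: real assume "0 < e"
    then obtain N where N: "measure lebesgue (A N) < e"
      using order_tendstoD(2)[OF lim0 \<open>0 < e\<close>] by (auto simp: eventually_sequentially)
    show "\<forall>\<^sub>F d in at_right 0. measure lebesgue (S d) < e"
    proof (rule eventually_at_rightI[where a=0 and b="inverse (real (Suc N))"])
      show "0 < inverse (real (Suc N))" by simp
      fix y :: real assume "y \<in> {0<..<inverse (real (Suc N))}"
      then have "S y \<subseteq> A N" unfolding A_def S_def by auto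
      then have "measure lebesgue (S y) \<le> measure lebesgue (A N)"
        by (rule measure_mono_fmeasurable) (use mS A_def in \<open>auto intro: fmeasurableD\<close>)
      then show "measure lebesgue (S y) < e" using N by linarith
    qed
  qed
  then show ?thesis unfolding S_def g_def .
qed



lemma vor2_closed_form:
  "vor2 Q n p i j = Q \<inter> (\<Inter>v\<in>{i,j}. \<Inter>w\<in>{1..n}-{i,j}. {q. dist q (p v) \<le> dist q (p w)})"
  unfolding vor2_def by auto

lemma compact_vor2:
  assumes "compact Q" shows "compact (vor2 Q n p i j)"
proof -
  have *: "closed {q. dist q (p v) \<le> dist q (p w)}" for v w
    by (intro closed_Collect_le continuous_intros)
  show ?thesis unfolding vor2_closed_form
    by (intro compact_Int_closed closed_INT ballI * assms)
qed

lemma dist_le_iff_sq: "dist q (a::pt) \<le> dist q b \<longleftrightarrow> (norm (q - a))^2 \<le> (norm (q - b))^2"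
  by (simp add: dist_norm power_mono_iff)

lemma vor2_iff:
  "q \<in> vor2 Q n p i j \<longleftrightarrow> q \<in> Q \<and> (\<forall>v\<in>{i,j}. \<forall>w\<in>{1..n}-{i,j}. (\<lambda>k. (norm (q - p k))^2) v \<le> (\<lambda>k. (norm (q - p k))^2) w)"
  unfolding vor2_def dist_le_iff_sq by auto

lemma D_integral:
  fixes Q :: "pt set" and \<phi> :: "pt \<Rightarrow> real" and p :: "nat \<Rightarrow> pt"
  assumes Q: "compact Q" and phic: "continuous_on Q \<phi>" and phi_nonneg: "\<forall>q\<in>Q. 0 \<le> \<phi> q"
    and n: "3 \<le> n" and i: "i \<in> {1..n}"
    and distinct: "\<forall>k\<in>{1..n}. \<forall>l\<in>{1..n}. k \<noteq> l \<longrightarrow> p k \<noteq> p l"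
  shows "((\<lambda>q. \<phi> q *\<^sub>R (if (1/2)*(norm (q - p i))^2 \<le> Apr (\<lambda>k. (norm (q - p k))^2) n i - Bmn (\<lambda>k. (norm (q - p k))^2) n i then p i - q else 0))
          has_integral (- (\<Sum>j\<in>Pidx Q n p i. mass \<phi> (vor2 Q n p i j) *\<^sub>R (centroid \<phi> (vor2 Q n p i j) - p i)))) Q"
proof -
  define V where "V = (\<lambda>j. vor2 Q n p i j)"
  define P where "P = Pidx Q n p i"
  define F where "F = (\<lambda>q. \<phi> q *\<^sub>R (p i - q))"
  define I where "I = (\<lambda>j. integral (V j) F)"
  have finP: "finite P" unfolding P_def Pidx_def by auto
  have PK: "P \<subseteq> KK n i" unfolding P_def Pidx_def KK_def by auto
  have VQ: "V j \<subseteq> Q" for j unfolding V_def vor2_def by auto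
  have cV: "compact (V j)" for j unfolding V_def using compact_vor2[OF Q] .
  obtain R0 where R0: "\<forall>q\<in>Q. norm q \<le> R0"
    using compact_imp_bounded[OF Q] bounded_pos by auto
  have phicV: "continuous_on (V j) \<phi>" for j using continuous_on_subset[OF phic VQ] .
  have eqj: "mass \<phi> (V j) *\<^sub>R (centroid \<phi> (V j) - p i) = - I j" for j
  proof -
    have i1: "(\<lambda>q. \<phi> q *\<^sub>R p i) integrable_on V j"
      by (rule int_compact[OF cV]) (intro continuous_intros phicV)
    have i2: "(\<lambda>q. \<phi> q *\<^sub>R q) integrable_on V j"
      by (rule int_compact[OF cV]) (intro continuous_intros phicV)
    have i3: "\<phi> integrable_on V j" by (rule int_compact[OF cV phicV])
    have "I j = integral (V j) (\<lambda>q. \<phi> q *\<^sub>R p i - \<phi> q *\<^sub>R q)"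
      unfolding I_def F_def by (simp add: scaleR_diff_right)
    also have "\<dots> = integral (V j) (\<lambda>q. \<phi> q *\<^sub>R p i) - integral (V j) (\<lambda>q. \<phi> q *\<^sub>R q)"
      by (rule integral_diff[OF i1 i2])
    also have "integral (V j) (\<lambda>q. \<phi> q *\<^sub>R p i) = mass \<phi> (V j) *\<^sub>R p i"
      unfolding mass_def using has_integral_scaleR_left[OF integrable_integral[OF i3], of "p i"]
      by (rule integral_unique)
    finally have Ij: "I j = mass \<phi> (V j) *\<^sub>R p i - integral (V j) (\<lambda>q. \<phi> q *\<^sub>R q)" .
    show ?thesis
    proof (cases "mass \<phi> (V j) = 0")
      case True
      have "norm (integral (V j) (\<lambda>q. \<phi> q *\<^sub>R q)) \<le> integral (V j) (\<lambda>q. R0 * \<phi> q)"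
      proof (rule integral_norm_bound_integral[OF i2])
        show "(\<lambda>q. R0 * \<phi> q) integrable_on V j" using integrable_on_cmult_left[OF i3] by simp
        fix x assume "x \<in> V j"
        then have "x \<in> Q" using VQ by auto
        then have "norm x \<le> R0" "0 \<le> \<phi> x" using R0 phi_nonneg by blast+
        then show "norm (\<phi> x *\<^sub>R x) \<le> R0 * \<phi> x"
          by (simp add: mult_left_mono mult.commute[of R0])
      qed
      also have "\<dots> = R0 * mass \<phi> (V j)" unfolding mass_def by simp
      finally have "integral (V j) (\<lambda>q. \<phi> q *\<^sub>R q) = 0" using True by simp
      then show ?thesis using Ij True by simp
    next
      case False
      then show ?thesis using Ij unfolding centroid_def mass_def[symmetric]
        by (simp add: scaleR_diff_right)
    qed
  qed
  have gsum: "- (\<Sum>j\<in>P. mass \<phi> (V j) *\<^sub>R (centroid \<phi> (V j) - p i)) = (\<Sum>j\<in>P. I j)"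
    using eqj by (simp add: sum_negf)
  have hj: "((\<lambda>q. if q \<in> V j then F q else 0) has_integral I j) Q" for j
  proof -
    have "F integrable_on V j" unfolding F_def
      by (rule int_compact[OF cV]) (intro continuous_intros phicV)
    then show ?thesis unfolding I_def using has_integral_restrict[OF VQ] integrable_integral by blast
  qed
  have hs: "((\<lambda>q. \<Sum>j\<in>P. (if q \<in> V j then F q else 0)) has_integral (\<Sum>j\<in>P. I j)) Q"
    by (rule has_integral_sum[OF finP hj])
  define N where "N = (\<Union>kl\<in>{(k,l). k \<in> {1..n} \<and> l \<in> {1..n} \<and> k \<noteq> l}. {q. norm (q - p (fst kl)) = norm (q - p (snd kl))})"
  have negN: "negligible N"
    unfolding N_def
  proof (rule negligible_Union)
    show "finite ((\<lambda>kl. {q. norm (q - p (fst kl)) = norm (q - p (snd kl))}) ` {(k,l). k \<in> {1..n} \<and> l \<in> {1..n} \<and> k \<noteq> l})"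
      by (rule finite_imageI, rule finite_subset[of _ "{1..n} \<times> {1..n}"]) auto
    fix T assume "T \<in> (\<lambda>kl. {q. norm (q - p (fst kl)) = norm (q - p (snd kl))}) ` {(k,l). k \<in> {1..n} \<and> l \<in> {1..n} \<and> k \<noteq> l}"
    then obtain k l where kl: "k \<in> {1..n}" "l \<in> {1..n}" "k \<noteq> l" "T = {q. norm (q - p k) = norm (q - p l)}"
      by auto
    have "p k \<noteq> p l" using distinct kl(1-3) by blast
    then show "negligible T" using negligible_equidist kl(4) by simp
  qed
  show ?thesis
    unfolding gsum[unfolded V_def P_def]
  proof (rule has_integral_spike[OF negN _ hs[unfolded V_def P_def]])
    fix q assume q: "q \<in> Q - N"
    define f where "f = (\<lambda>k. (norm (q - p k))^2)"
    have cell: "q \<in> vor2 Q n p i j \<longleftrightarrow> (\<forall>v\<in>{i,j}. \<forall>w\<in>{1..n}-{i,j}. f v \<le> f w)" for j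
      using q unfolding vor2_iff f_def by auto
    show "\<phi> q *\<^sub>R (if (1/2)*(norm (q - p i))^2 \<le> Apr (\<lambda>k. (norm (q - p k))^2) n i - Bmn (\<lambda>k. (norm (q - p k))^2) n i then p i - q else 0)
        = (\<Sum>j\<in>Pidx Q n p i. (if q \<in> vor2 Q n p i j then F q else 0))"
    proof (cases "(1/2)*f i + Bmn f n i \<le> Apr f n i")
      case True
      obtain c where c: "c \<in> KK n i" "\<forall>v\<in>{i,c}. \<forall>w\<in>{1..n}-{i,c}. f v \<le> f w"
        using imp_cell[OF n i True] by blast
      have qc: "q \<in> vor2 Q n p i c" using cell c by blast
      have cP: "c \<in> Pidx Q n p i" using c qc unfolding Pidx_def KK_def by auto
      have uniq: "j = c" if "j \<in> Pidx Q n p i" "q \<in> vor2 Q n p i j" for j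
      proof (rule ccontr)
        assume jc: "j \<noteq> c"
        have jK: "j \<in> KK n i" using that PK P_def by auto
        have Cj: "\<forall>v\<in>{i,j}. \<forall>w\<in>{1..n}-{i,j}. f v \<le> f w" using cell that by blast
        have "f j \<le> f c" using Cj jc c(1) unfolding KK_def by blast
        moreover have "f c \<le> f j" using c(2) jc jK unfolding KK_def by blast
        ultimately have "f j = f c" by simp
        then have "norm (q - p j) = norm (q - p c)" unfolding f_def
          by (simp add: power2_eq_iff_nonneg)
        moreover have jn: "j \<in> {1..n}" using jK unfolding KK_def by blast
        moreover have cn: "c \<in> {1..n}" using c(1) unfolding KK_def by blast
        ultimately have "q \<in> N" unfolding N_def using jc
          by (intro UN_I[of "(j,c)"]) auto
        then show False using q by blast
      qed
      have each: "(if q \<in> vor2 Q n p i j then F q else 0) = (if j = c then F q else 0)"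
        if jP: "j \<in> Pidx Q n p i" for j
      proof (cases "j = c")
        case True then show ?thesis using qc by simp
      next
        case False
        then have "q \<notin> vor2 Q n p i j" using uniq[OF jP] by blast
        then show ?thesis using False by simp
      qed
      have finPi: "finite (Pidx Q n p i)" using finP unfolding P_def .
      have "(\<Sum>j\<in>Pidx Q n p i. (if q \<in> vor2 Q n p i j then F q else 0)) = (\<Sum>j\<in>Pidx Q n p i. (if j = c then F q else 0))"
        by (rule sum.cong[OF refl each])
      also have "\<dots> = F q" using cP finPi by (simp add: sum.delta)
      finally show ?thesis using True unfolding F_def f_def by (simp add: algebra_simps)
    next
      case False
      have "q \<notin> vor2 Q n p i j" if "j \<in> Pidx Q n p i" for j
      proof
        assume "q \<in> vor2 Q n p i j"
        then have "\<forall>v\<in>{i,j}. \<forall>w\<in>{1..n}-{i,j}. f v \<le> f w" using cell by blast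
        moreover have "j \<in> KK n i" using that PK P_def by auto
        ultimately show False using cell_imp[OF n i] False by blast
      qed
      then have "(\<Sum>j\<in>Pidx Q n p i. (if q \<in> vor2 Q n p i j then F q else 0)) = 0" by simp
      then show ?thesis using False unfolding f_def by (simp add: algebra_simps)
    qed
  qed
qed



lemma Apr_cong: "(\<And>k. k \<in> KK n i \<Longrightarrow> f k = g k) \<Longrightarrow> Apr f n i = Apr g n i"
  unfolding Apr_def by (intro arg_cong[where f=Min] image_cong) auto

lemma Bmn_cong: "(\<And>k. k \<in> KK n i \<Longrightarrow> f k = g k) \<Longrightarrow> Bmn f n i = Bmn g n i"
  unfolding Bmn_def by (intro arg_cong[where f=Min] image_cong) auto

lemma perf_integrand:
  fixes p :: "nat \<Rightarrow> pt"
  assumes n: "3 \<le> n" and i: "i \<in> {1..n}"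
  shows "Min ((\<lambda>(a, b). (1/2) * ((norm (q - (p(i:=y)) a))\<^sup>2 + (norm (q - (p(i:=y)) b))\<^sup>2))
            ` {(a, b). 1 \<le> a \<and> a < b \<and> b \<le> n})
    = Bmn (\<lambda>k. (norm (q - p k))^2) n i
      + min (Apr (\<lambda>k. (norm (q - p k))^2) n i - Bmn (\<lambda>k. (norm (q - p k))^2) n i) ((1/2)*(norm (q - y))^2)"
proof -
  define g where "g = (\<lambda>k. (norm (q - (p(i:=y)) k))^2)"
  have 1: "Min ((\<lambda>(a, b). (1/2) * ((norm (q - (p(i:=y)) a))\<^sup>2 + (norm (q - (p(i:=y)) b))\<^sup>2))
            ` {(a, b). 1 \<le> a \<and> a < b \<and> b \<le> n}) = Min ((\<lambda>(a, b). (1/2) * (g a + g b)) ` {(a, b). 1 \<le> a \<and> a < b \<and> b \<le> n})"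
    unfolding g_def by (rule refl)
  have 2: "Min ((\<lambda>(a, b). (1/2) * (g a + g b)) ` {(a, b). 1 \<le> a \<and> a < b \<and> b \<le> n}) = min (Apr g n i) ((1/2)*g i + Bmn g n i)"
    unfolding Apr_def Bmn_def KK_def by (rule pairs_split[OF n i])
  have 3: "Apr g n i = Apr (\<lambda>k. (norm (q - p k))^2) n i"
    by (rule Apr_cong) (auto simp: g_def KK_def)
  have 4: "Bmn g n i = Bmn (\<lambda>k. (norm (q - p k))^2) n i"
    by (rule Bmn_cong) (auto simp: g_def KK_def)
  have 5: "g i = (norm (q - y))^2" unfolding g_def by simp
  have 6: "min X ((1/2)*c + Bv) = Bv + min (X - Bv) ((1/2)*c)" for X c Bv :: real
    by (auto simp: min_def)
  show ?thesis unfolding 1 2 3 4 5 6 ..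
qed

lemma rbound:
  fixes m ay a0 d e :: real
  assumes "ay - a0 = d + e" "0 \<le> e"
  shows "\<bar>min m ay - min m a0 - (if a0 \<le> m then d else 0)\<bar> \<le> e + (if \<bar>a0 - m\<bar> \<le> \<bar>d\<bar> + e then 2*\<bar>d\<bar> + e else 0)"
  using assms by (cases "a0 \<le> m"; cases "ay \<le> m"; cases "\<bar>a0 - m\<bar> \<le> \<bar>d\<bar> + e") (simp_all add: min_def; linarith)+

lemma contA:
  fixes p :: "nat \<Rightarrow> pt"
  assumes n: "3 \<le> n" and i: "i \<in> {1..n}"
  shows "continuous_on S (\<lambda>q. Apr (\<lambda>k. (norm (q - p k))^2) n i)"
proof -
  define PK where "PK = {(a,b). a \<in> KK n i \<and> b \<in> KK n i \<and> a < b}"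
  obtain a0 b0 where ab: "a0 \<in> KK n i" "b0 \<in> KK n i" "a0 < b0" using K_two[OF n i] unfolding KK_def by blast
  have "finite PK" unfolding PK_def by (rule finite_pairs) (simp add: KK_def)
  moreover have "PK \<noteq> {}" using ab unfolding PK_def by auto
  moreover have "continuous_on S (\<lambda>q. case k of (a,b) \<Rightarrow> (1/2)*((norm (q - p a))^2 + (norm (q - p b))^2))" for k
    by (cases k) (auto intro!: continuous_intros)
  ultimately have "continuous_on S (\<lambda>q. Min ((\<lambda>k. case k of (a,b) \<Rightarrow> (1/2)*((norm (q - p a))^2 + (norm (q - p b))^2)) ` PK))"
    by (intro continuous_on_Min_img) auto
  then show ?thesis unfolding Apr_def PK_def by simp
qed

lemma contB:
  fixes p :: "nat \<Rightarrow> pt"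
  assumes n: "3 \<le> n" and i: "i \<in> {1..n}"
  shows "continuous_on S (\<lambda>q. Bmn (\<lambda>k. (norm (q - p k))^2) n i)"
proof -
  obtain a0 b0 where ab: "a0 \<in> KK n i" "b0 \<in> KK n i" "a0 < b0" using K_two[OF n i] unfolding KK_def by blast
  have "finite (KK n i)" by (simp add: KK_def)
  moreover have "KK n i \<noteq> {}" using ab by auto
  moreover have "continuous_on S (\<lambda>q. (1/2)*(norm (q - p k))^2)" for k
    by (auto intro!: continuous_intros)
  ultimately have "continuous_on S (\<lambda>q. Min ((\<lambda>k. (1/2)*(norm (q - p k))^2) ` KK n i))"
    by (intro continuous_on_Min_img) auto
  then show ?thesis unfolding Bmn_def by simp
qed

lemma diff_a:
  fixes q h x :: pt
  shows "(1/2)*(norm (q - (x + h)))^2 - (1/2)*(norm (q - x))^2 = (x - q) \<bullet> h + (1/2)*(norm h)^2"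
  by (simp add: power2_norm_eq_inner inner_diff_left inner_diff_right inner_add_left inner_add_right inner_commute algebra_simps)



theorem mainTheorem4:
  fixes Q :: "pt set" and \<phi> :: "pt \<Rightarrow> real" and n :: nat and p :: "nat \<Rightarrow> pt" and i :: nat
  assumes Q: "compact Q" "convex Q" "polytope Q" "interior Q \<noteq> {}"
    and phi_nonneg: "\<forall>q\<in>Q. 0 \<le> \<phi> q"
    and phi_C2: "\<exists>U. open U \<and> Q \<subseteq> U \<and> C2_on U \<phi>"
    and n: "n \<ge> 3"
    and pQ: "\<forall>k\<in>{1..n}. p k \<in> Q"
    and distinct: "\<forall>k\<in>{1..n}. \<forall>l\<in>{1..n}. k \<noteq> l \<longrightarrow> p k \<noteq> p l"
    and massW_pos: "\<forall>k\<in>{1..n}. massW Q \<phi> n p k > 0"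
    and i: "i \<in> {1..n}"
  shows "((\<lambda>x. perfH Q \<phi> n (p(i := x))) has_derivative
           (\<lambda>v. (- (\<Sum>j\<in>Pidx Q n p i.
                     mass \<phi> (vor2 Q n p i j) *\<^sub>R (centroid \<phi> (vor2 Q n p i j) - p i))) \<bullet> v))
           (at (p i))
       \<and> (- (\<Sum>j\<in>Pidx Q n p i.
                 mass \<phi> (vor2 Q n p i j) *\<^sub>R (centroid \<phi> (vor2 Q n p i j) - p i)))
         = - (massW Q \<phi> n p i *\<^sub>R (centroidW Q \<phi> n p i - p i))"
proof
  obtain U where U: "open U" "Q \<subseteq> U" "C2_on U \<phi>" using phi_C2 by blast
  then obtain f' :: "pt \<Rightarrow> pt \<Rightarrow>\<^sub>L real" where f': "\<forall>x\<in>U. (\<phi> has_derivative blinfun_apply (f' x)) (at x)"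
    unfolding C2_on_def by blast
  have "\<forall>x\<in>U. isCont \<phi> x" using f' has_derivative_continuous by blast
  then have "continuous_on U \<phi>" by (rule continuous_at_imp_continuous_on)
  then have phic: "continuous_on Q \<phi>" using U(2) continuous_on_subset by blast
  define K where "K = KK n i"
  define A where "A = (\<lambda>q. Apr (\<lambda>k. (norm (q - p k))^2) n i)"
  define B where "B = (\<lambda>q. Bmn (\<lambda>k. (norm (q - p k))^2) n i)"
  define m where "m = (\<lambda>q. A q - B q)"
  define a where "a = (\<lambda>(y::pt) (q::pt). (1/2)*(norm (q - y))^2)"
  define D where "D = (\<lambda>q. if a (p i) q \<le> m q then p i - q else 0)"
  define gvec where "gvec = - (\<Sum>j\<in>Pidx Q n p i. mass \<phi> (vor2 Q n p i j) *\<^sub>R (centroid \<phi> (vor2 Q n p i j) - p i))"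
  define G where "G = (\<lambda>y q. (B q + min (m q) (a y q)) * \<phi> q)"
  define H where "H = (\<lambda>y. perfH Q \<phi> n (p(i := y)))"
  have hD: "((\<lambda>q. \<phi> q *\<^sub>R D q) has_integral gvec) Q"
    using D_integral[OF Q(1) phic phi_nonneg n i distinct]
    unfolding D_def a_def m_def A_def B_def gvec_def by simp
  have Heq: "H y = integral Q (G y)" for y
    unfolding H_def perfH_def G_def
    by (rule integral_cong, simp only: perf_integrand[OF n i] B_def m_def A_def a_def)
  have cA: "continuous_on Q A" unfolding A_def by (rule contA[OF n i])
  have cB: "continuous_on Q B" unfolding B_def by (rule contB[OF n i])
  have Gint: "G y integrable_on Q" for y
    unfolding G_def m_def a_def
    by (rule int_compact[OF Q(1)]) (intro continuous_intros cA cB phic)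
  have Ghas: "(G y has_integral H y) Q" for y
    unfolding Heq using Gint by (rule integrable_integral)
  obtain R0 where R0: "R0 > 0" "\<forall>q\<in>Q. norm q \<le> R0"
    using compact_imp_bounded[OF Q(1)] bounded_pos by auto
  define R where "R = 2 * R0"
  have piQ: "p i \<in> Q" using pQ i by blast
  have Rq: "norm (p i - q) \<le> R" if "q \<in> Q" for q
  proof -
    have "norm (p i - q) \<le> norm (p i) + norm q" by (rule norm_triangle_ineq4)
    also have "\<dots> \<le> R0 + R0" using R0 piQ that by (intro add_mono) auto
    finally show ?thesis unfolding R_def by simp
  qed
  have R_nonneg: "0 \<le> R" unfolding R_def using R0 by simp
  obtain Mp where Mp: "Mp > 0" "\<forall>q\<in>Q. \<phi> q \<le> Mp"
  proof -
    have "compact (\<phi> ` Q)" by (rule compact_continuous_image[OF phic Q(1)])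
    then obtain b where "b > 0" "\<forall>x\<in>\<phi> ` Q. norm x \<le> b"
      using compact_imp_bounded bounded_pos by metis
    then show ?thesis using that by force
  qed
  define Phi where "Phi = integral Q \<phi>"
  define T where "T = (\<lambda>k d. Q \<inter> {q. \<bar>(1/2)*(norm (q - p i))^2 - (1/2)*(norm (q - p k))^2\<bar> \<le> d})"
  define \<mu> where "\<mu> = (\<lambda>k d. measure lebesgue (T k d))"
  have Kfin: "finite K" unfolding K_def KK_def by simp
  have Kn: "k \<in> {1..n}" "k \<noteq> i" if "k \<in> K" for k using that unfolding K_def KK_def by auto
  have pk: "p i \<noteq> p k" if "k \<in> K" for k using distinct i Kn[OF that] by metis
  have cT: "compact (T k d)" for k d
  proof -
    have "closed {q. \<bar>(1/2)*(norm (q - p i))^2 - (1/2)*(norm (q - p k))^2\<bar> \<le> d}"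
      by (intro closed_Collect_le continuous_intros)
    then show ?thesis unfolding T_def using Q(1) by (simp add: compact_Int_closed)
  qed
  have TQ: "T k d \<subseteq> Q" for k d unfolding T_def by auto
  have slab: "((\<lambda>d. \<mu> k d) \<longlongrightarrow> 0) (at_right 0)" if "k \<in> K" for k
    unfolding \<mu>_def T_def using slab_lim[OF Q(1) pk[OF that]] .
  have Tint: "(\<lambda>q. if q \<in> T k d then \<phi> q else 0) integrable_on Q" for k d
  proof -
    have "\<phi> integrable_on T k d" by (rule int_compact[OF cT continuous_on_subset[OF phic TQ]])
    then show ?thesis using has_integral_restrict[OF TQ] integrable_integral integrable_on_def by blast
  qed
  have Tbound: "integral Q (\<lambda>q. if q \<in> T k d then \<phi> q else 0) \<le> Mp * \<mu> k d" for k d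
  proof -
    have phT: "\<phi> integrable_on T k d" by (rule int_compact[OF cT continuous_on_subset[OF phic TQ]])
    have "integral Q (\<lambda>q. if q \<in> T k d then \<phi> q else 0) = integral (T k d) \<phi>"
      using has_integral_restrict[OF TQ] integrable_integral[OF phT] integral_unique by blast
    also have "\<dots> \<le> integral (T k d) (\<lambda>q. Mp * 1)"
    proof (rule integral_le[OF phT])
      show "(\<lambda>q. Mp * 1) integrable_on T k d" by (rule integrable_on_const[OF lmeasurable_compact[OF cT]])
      fix x assume "x \<in> T k d"
      then have "x \<in> Q" using TQ by blast
      then show "\<phi> x \<le> Mp * 1" using Mp by simp
    qed
    also have "\<dots> = Mp * \<mu> k d"
      unfolding \<mu>_def lmeasure_integral[OF lmeasurable_compact[OF cT]] by (rule integral_mult_right)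
    finally show ?thesis .
  qed
  have pw: "norm (G (p i + h) q - G (p i) q - (\<phi> q *\<^sub>R D q) \<bullet> h)
      \<le> (1/2)*(norm h)^2 * \<phi> q + ((2*R+1)*norm h) * (\<Sum>k\<in>K. if q \<in> T k ((R+1)*norm h) then \<phi> q else 0)"
    if q: "q \<in> Q" and h1: "norm h \<le> 1" for q h
  proof -
    define d where "d = (p i - q) \<bullet> h"
    define e where "e = (1/2)*(norm h)^2"
    define \<delta> where "\<delta> = (R+1)*norm h"
    have ph: "0 \<le> \<phi> q" using phi_nonneg q by blast
    have ad: "a (p i + h) q - a (p i) q = d + e" unfolding a_def d_def e_def by (rule diff_a)
    have e0: "0 \<le> e" unfolding e_def by simp
    have dle: "\<bar>d\<bar> \<le> R * norm h"
    proof -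
      have "\<bar>d\<bar> \<le> norm (p i - q) * norm h" unfolding d_def by (rule Cauchy_Schwarz_ineq2)
      also have "\<dots> \<le> R * norm h" using Rq[OF q] by (simp add: mult_right_mono)
      finally show ?thesis .
    qed
    have ele: "e \<le> norm h"
    proof -
      have "(norm h)^2 \<le> norm h" using h1 by (simp add: power2_eq_square mult_le_one mult_left_le)
      then show ?thesis unfolding e_def using norm_ge_zero[of h] by linarith
    qed
    have rb: "\<bar>min (m q) (a (p i + h) q) - min (m q) (a (p i) q) - (if a (p i) q \<le> m q then d else 0)\<bar>
        \<le> e + (if \<bar>a (p i) q - m q\<bar> \<le> \<bar>d\<bar> + e then 2*\<bar>d\<bar> + e else 0)"
      by (rule rbound[OF ad e0])
    have ind: "(if \<bar>a (p i) q - m q\<bar> \<le> \<bar>d\<bar> + e then 2*\<bar>d\<bar> + e else 0) * \<phi> q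
        \<le> ((2*R+1)*norm h) * (\<Sum>k\<in>K. if q \<in> T k \<delta> then \<phi> q else 0)"
    proof (cases "\<bar>a (p i) q - m q\<bar> \<le> \<bar>d\<bar> + e")
      case True
      obtain k where k: "k \<in> K" "A q = B q + (1/2)*(norm (q - p k))^2"
        using m_is_e[OF n i, of "\<lambda>k. (norm (q - p k))^2"] unfolding A_def B_def K_def by auto
      have "\<bar>(1/2)*(norm (q - p i))^2 - (1/2)*(norm (q - p k))^2\<bar> \<le> \<delta>"
        using True k(2) dle ele unfolding m_def a_def \<delta>_def by (simp add: algebra_simps)
      then have qT: "q \<in> T k \<delta>" unfolding T_def using q by blast
      have "\<phi> q \<le> (\<Sum>k\<in>K. if q \<in> T k \<delta> then \<phi> q else 0)"
      proof -
        have "(if q \<in> T k \<delta> then \<phi> q else 0) \<le> (\<Sum>k\<in>K. if q \<in> T k \<delta> then \<phi> q else 0)"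
          by (rule member_le_sum[OF k(1)]) (use ph Kfin in auto)
        then show ?thesis using qT by simp
      qed
      moreover have "2*\<bar>d\<bar> + e \<le> (2*R+1)*norm h" using dle ele by (simp add: algebra_simps)
      moreover have "0 \<le> 2*\<bar>d\<bar> + e" using e0 by simp
      ultimately show ?thesis using True ph
        by (simp add: mult_mono')
    next
      case False
      have "0 \<le> (\<Sum>k\<in>K. if q \<in> T k \<delta> then \<phi> q else 0)" by (rule sum_nonneg) (use ph in auto)
      then show ?thesis using False R_nonneg by simp
    qed
    have "G (p i + h) q - G (p i) q - (\<phi> q *\<^sub>R D q) \<bullet> h
        = (min (m q) (a (p i + h) q) - min (m q) (a (p i) q) - (if a (p i) q \<le> m q then d else 0)) * \<phi> q"
      unfolding G_def D_def d_def by (simp add: algebra_simps)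
    then have "norm (G (p i + h) q - G (p i) q - (\<phi> q *\<^sub>R D q) \<bullet> h)
        = \<bar>min (m q) (a (p i + h) q) - min (m q) (a (p i) q) - (if a (p i) q \<le> m q then d else 0)\<bar> * \<phi> q"
      using ph by (simp add: abs_mult)
    also have "\<dots> \<le> (e + (if \<bar>a (p i) q - m q\<bar> \<le> \<bar>d\<bar> + e then 2*\<bar>d\<bar> + e else 0)) * \<phi> q"
      using rb ph by (rule mult_right_mono)
    also have "\<dots> \<le> e * \<phi> q + ((2*R+1)*norm h) * (\<Sum>k\<in>K. if q \<in> T k \<delta> then \<phi> q else 0)"
      using ind by (simp add: distrib_right)
    finally show ?thesis unfolding e_def \<delta>_def .
  qed
  have est: "norm (H (p i + h) - H (p i) - gvec \<bullet> h) / norm h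
      \<le> (1/2)*norm h*Phi + (2*R+1)*Mp*(\<Sum>k\<in>K. \<mu> k ((R+1)*norm h))"
    if h0: "h \<noteq> 0" and h1: "norm h \<le> 1" for h
  proof -
    define \<delta> where "\<delta> = (R+1)*norm h"
    define bnd where "bnd = (\<lambda>q. (1/2)*(norm h)^2 * \<phi> q + ((2*R+1)*norm h) * (\<Sum>k\<in>K. if q \<in> T k \<delta> then \<phi> q else 0))"
    have hlin: "((\<lambda>q. (\<phi> q *\<^sub>R D q) \<bullet> h) has_integral gvec \<bullet> h) Q"
      using has_integral_linear[OF hD bounded_linear_inner_left[of h]] by (simp add: o_def)
    have hE: "((\<lambda>q. G (p i + h) q - G (p i) q - (\<phi> q *\<^sub>R D q) \<bullet> h) has_integral (H (p i + h) - H (p i) - gvec \<bullet> h)) Q"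
      by (intro has_integral_diff Ghas hlin)
    have phint: "\<phi> integrable_on Q" by (rule int_compact[OF Q(1) phic])
    have sint: "(\<lambda>q. \<Sum>k\<in>K. if q \<in> T k \<delta> then \<phi> q else 0) integrable_on Q"
      by (rule integrable_sum[OF Kfin]) (rule Tint)
    have bint: "bnd integrable_on Q" unfolding bnd_def
      by (intro integrable_add integrable_on_mult_right phint sint)
    have "norm (H (p i + h) - H (p i) - gvec \<bullet> h) = norm (integral Q (\<lambda>q. G (p i + h) q - G (p i) q - (\<phi> q *\<^sub>R D q) \<bullet> h))"
      using integral_unique[OF hE] by simp
    also have "\<dots> \<le> integral Q bnd"
    proof (rule integral_norm_bound_integral[OF has_integral_integrable[OF hE] bint])
      fix q assume "q \<in> Q"
      then show "norm (G (p i + h) q - G (p i) q - (\<phi> q *\<^sub>R D q) \<bullet> h) \<le> bnd q"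
        unfolding bnd_def \<delta>_def by (rule pw[OF _ h1])
    qed
    also have "integral Q bnd = (1/2)*(norm h)^2 * Phi + ((2*R+1)*norm h) * (\<Sum>k\<in>K. integral Q (\<lambda>q. if q \<in> T k \<delta> then \<phi> q else 0))"
    proof -
      have "integral Q bnd = integral Q (\<lambda>q. (1/2)*(norm h)^2 * \<phi> q) + integral Q (\<lambda>q. ((2*R+1)*norm h) * (\<Sum>k\<in>K. if q \<in> T k \<delta> then \<phi> q else 0))"
        unfolding bnd_def by (rule integral_add) (intro integrable_on_mult_right phint sint)+
      also have "\<dots> = (1/2)*(norm h)^2 * Phi + ((2*R+1)*norm h) * integral Q (\<lambda>q. \<Sum>k\<in>K. if q \<in> T k \<delta> then \<phi> q else 0)"
        unfolding Phi_def by simp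
      also have "integral Q (\<lambda>q. \<Sum>k\<in>K. if q \<in> T k \<delta> then \<phi> q else 0) = (\<Sum>k\<in>K. integral Q (\<lambda>q. if q \<in> T k \<delta> then \<phi> q else 0))"
        by (rule integral_sum[OF Kfin]) (rule Tint)
      finally show ?thesis .
    qed
    also have "\<dots> \<le> (1/2)*(norm h)^2 * Phi + ((2*R+1)*norm h) * (\<Sum>k\<in>K. Mp * \<mu> k \<delta>)"
      using R_nonneg by (intro add_left_mono mult_left_mono sum_mono Tbound) auto
    also have "\<dots> = norm h * ((1/2)*norm h*Phi + (2*R+1)*Mp*(\<Sum>k\<in>K. \<mu> k ((R+1)*norm h)))"
      unfolding \<delta>_def by (simp add: sum_distrib_left power2_eq_square algebra_simps)
    finally have "norm (H (p i + h) - H (p i) - gvec \<bullet> h) \<le> norm h * ((1/2)*norm h*Phi + (2*R+1)*Mp*(\<Sum>k\<in>K. \<mu> k ((R+1)*norm h)))" .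
    moreover have "0 < norm h" using h0 by simp
    ultimately show ?thesis by (simp add: pos_divide_le_eq mult.commute)
  qed
  have fl: "filterlim (\<lambda>h::pt. (R+1)*norm h) (at_right 0) (at 0)"
    unfolding filterlim_at
  proof
    show "\<forall>\<^sub>F h in at 0. (R+1)*norm h \<in> {0<..} \<and> (R+1)*norm h \<noteq> 0"
      unfolding eventually_at using R_nonneg by (intro exI[of _ 1]) (auto simp: add_nonneg_pos)
    have "((\<lambda>h::pt. (R+1)*norm h) \<longlongrightarrow> (R+1)*0) (at 0)"
      by (intro tendsto_mult tendsto_const tendsto_norm_zero tendsto_ident_at)
    then show "((\<lambda>h::pt. (R+1)*norm h) \<longlongrightarrow> 0) (at 0)" by simp
  qed
  have lk: "((\<lambda>h::pt. \<mu> k ((R+1)*norm h)) \<longlongrightarrow> 0) (at 0)" if "k \<in> K" for k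
    using filterlim_compose[OF slab[OF that] fl] .
  have lim: "((\<lambda>h::pt. (1/2)*norm h*Phi + (2*R+1)*Mp*(\<Sum>k\<in>K. \<mu> k ((R+1)*norm h))) \<longlongrightarrow> 0) (at 0)"
  proof -
    have "((\<lambda>h::pt. (1/2)*norm h*Phi + (2*R+1)*Mp*(\<Sum>k\<in>K. \<mu> k ((R+1)*norm h))) \<longlongrightarrow> (1/2)*0*Phi + (2*R+1)*Mp*(\<Sum>k\<in>K. 0)) (at 0)"
      by (intro tendsto_add tendsto_mult tendsto_const tendsto_norm_zero tendsto_ident_at tendsto_sum lk)
    then show ?thesis by simp
  qed
  have "(H has_derivative (\<lambda>v. gvec \<bullet> v)) (at (p i))"
    unfolding has_derivative_at
  proof
    show "bounded_linear (\<lambda>v. gvec \<bullet> v)" by (rule bounded_linear_inner_right)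
    show "((\<lambda>h. norm (H (p i + h) - H (p i) - gvec \<bullet> h) / norm h) \<longlongrightarrow> 0) (at 0)"
    proof (rule Lim_null_comparison[OF _ lim])
      show "\<forall>\<^sub>F h in at 0. norm (norm (H (p i + h) - H (p i) - gvec \<bullet> h) / norm h)
          \<le> (1/2)*norm h*Phi + (2*R+1)*Mp*(\<Sum>k\<in>K. \<mu> k ((R+1)*norm h))"
        unfolding eventually_at
      proof (intro exI[of _ 1] conjI allI ballI impI)
        fix h :: pt assume "h \<in> UNIV" "h \<noteq> 0 \<and> dist h 0 < 1"
        then have "h \<noteq> 0" "norm h \<le> 1" by auto
        then show "norm (norm (H (p i + h) - H (p i) - gvec \<bullet> h) / norm h)
          \<le> (1/2)*norm h*Phi + (2*R+1)*Mp*(\<Sum>k\<in>K. \<mu> k ((R+1)*norm h))"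
          using est by simp
      qed simp
    qed
  qed
  then show "((\<lambda>x. perfH Q \<phi> n (p(i := x))) has_derivative
           (\<lambda>v. (- (\<Sum>j\<in>Pidx Q n p i.
                     mass \<phi> (vor2 Q n p i j) *\<^sub>R (centroid \<phi> (vor2 Q n p i j) - p i))) \<bullet> v))
           (at (p i))"
    unfolding H_def gvec_def .
next
  define P where "P = Pidx Q n p i"
  define V where "V = (\<lambda>j. vor2 Q n p i j)"
  show "- (\<Sum>j\<in>Pidx Q n p i. mass \<phi> (vor2 Q n p i j) *\<^sub>R (centroid \<phi> (vor2 Q n p i j) - p i))
         = - (massW Q \<phi> n p i *\<^sub>R (centroidW Q \<phi> n p i - p i))"
  proof -
    have "massW Q \<phi> n p i > 0" using massW_pos i by blast
    then have mw: "massW Q \<phi> n p i \<noteq> 0" by simp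
    have 1: "(\<Sum>j\<in>P. mass \<phi> (V j) *\<^sub>R (centroid \<phi> (V j) - p i))
        = (\<Sum>j\<in>P. mass \<phi> (V j) *\<^sub>R centroid \<phi> (V j)) - massW Q \<phi> n p i *\<^sub>R p i"
      unfolding massW_def P_def[symmetric] V_def[symmetric]
      by (simp add: scaleR_diff_right sum_subtractf scaleR_sum_left)
    have 2: "massW Q \<phi> n p i *\<^sub>R (centroidW Q \<phi> n p i - p i)
        = (\<Sum>j\<in>P. mass \<phi> (V j) *\<^sub>R centroid \<phi> (V j)) - massW Q \<phi> n p i *\<^sub>R p i"
      unfolding centroidW_def P_def[symmetric] V_def[symmetric] using mw
      by (simp add: scaleR_diff_right)
    show ?thesis using 1 2 unfolding P_def V_def by simp
  qed
qed


end
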